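(* Let $G$ be a finite simple graph of order $n$ without isolated vertices, with $\gamma_t(G)=2$ and maximum degree $\Delta(G)\le n-2$. Then $$\tau(G)\le \binom{n}{2}-\left\lceil \frac{n}{2}\right\rceil,$$ and this bound is sharp (attained with equality by some such graph).
   Context: A set $D \subseteq V(G)$ is a total dominating set of $G$ if every vertex of $G$ has a neighbor in $D$. $\gamma_t(G)$ is the minimum cardinality of a total dominating set; a minimum one is a $\gamma_t(G)$-set, and $\tau(G)$ is the number of $\gamma_t(G)$-sets. *)

theory Defs
  imports Complex_Main
begin

definition simple_graph :: "'a set \<Rightarrow> ('a \<Rightarrow> 'a \<Rightarrow> bool) \<Rightarrow> bool" where
  "simple_graph V E \<longleftrightarrow> finite V \<and> (\<forall>u v. E u v \<longrightarrow> u \<in> V \<and> v \<in> V)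
     \<and> (\<forall>u v. E u v \<longrightarrow> E v u) \<and> (\<forall>v. \<not> E v v)"

definition degree :: "'a set \<Rightarrow> ('a \<Rightarrow> 'a \<Rightarrow> bool) \<Rightarrow> 'a \<Rightarrow> nat" where
  "degree V E v = card {u \<in> V. E v u}"

definition no_isolated :: "'a set \<Rightarrow> ('a \<Rightarrow> 'a \<Rightarrow> bool) \<Rightarrow> bool" where
  "no_isolated V E \<longleftrightarrow> (\<forall>v\<in>V. \<exists>u\<in>V. E v u)"

definition total_dominating :: "'a set \<Rightarrow> ('a \<Rightarrow> 'a \<Rightarrow> bool) \<Rightarrow> 'a set \<Rightarrow> bool" where
  "total_dominating V E D \<longleftrightarrow> D \<subseteq> V \<and> (\<forall>v\<in>V. \<exists>u\<in>D. E v u)"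

definition gamma_t :: "'a set \<Rightarrow> ('a \<Rightarrow> 'a \<Rightarrow> bool) \<Rightarrow> nat" where
  "gamma_t V E = (LEAST k. \<exists>D. total_dominating V E D \<and> card D = k)"

definition gamma_t_sets :: "'a set \<Rightarrow> ('a \<Rightarrow> 'a \<Rightarrow> bool) \<Rightarrow> 'a set set" where
  "gamma_t_sets V E = {D. total_dominating V E D \<and> card D = gamma_t V E}"

definition tau :: "'a set \<Rightarrow> ('a \<Rightarrow> 'a \<Rightarrow> bool) \<Rightarrow> nat" where
  "tau V E = card (gamma_t_sets V E)"

end

theory Submission
  imports Defs
begin

lemma upper:
  fixes V :: "'a set"
  assumes sg: "simple_graph V E" and ni: "no_isolated V E"
    and deg: "\<forall>v\<in>V. degree V E v \<le> card V - 2" and g2: "gamma_t V E = 2"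
  shows "int (tau V E) \<le> int (card V choose 2) - \<lceil>real (card V) / 2\<rceil>"
proof -
  have fin: "finite V" using sg by (simp add: simple_graph_def)
  have irr: "\<And>v. \<not> E v v" using sg by (simp add: simple_graph_def)
  have ex: "\<exists>x\<in>V. x \<noteq> w \<and> \<not> E w x" if w: "w \<in> V" for w
  proof (rule ccontr)
    assume "\<not> ?thesis"
    hence eq: "{u \<in> V. E w u} = V - {w}" using irr by auto
    obtain u where u: "u \<in> V" "E w u" using ni w by (auto simp: no_isolated_def)
    have "u \<noteq> w" using u irr by auto
    hence "card {w,u} \<le> card V" using u w fin by (intro card_mono) auto
    hence "card V \<ge> 2" using \<open>u \<noteq> w\<close> by simp
    have "degree V E w = card V - 1" unfolding degree_def eq using fin w by simp
    with deg w \<open>card V \<ge> 2\<close> show False by force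
  qed
  define f where "f w = (SOME x. x \<in> V \<and> x \<noteq> w \<and> \<not> E w x)" for w
  have f: "f w \<in> V \<and> f w \<noteq> w \<and> \<not> E w (f w)" if "w \<in> V" for w
    using someI_ex[OF ex[OF that, unfolded Bex_def]] unfolding f_def by blast
  define P where "P = (\<lambda>w. {w, f w}) ` V"
  define S where "S = {D. D \<subseteq> V \<and> card D = 2}"
  have PS: "P \<subseteq> S" unfolding P_def S_def
  proof (auto)
    fix w assume "w \<in> V" thus "f w \<in> V" using f by blast
  next
    fix w assume "w \<in> V" thus "card {w, f w} = 2" using f[of w] by auto
  qed
  have finS: "finite S" unfolding S_def using fin by simp
  have sub: "gamma_t_sets V E \<subseteq> S - P"
  proof
    fix D assume D: "D \<in> gamma_t_sets V E"
    hence td: "total_dominating V E D" and c: "card D = 2"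
      by (auto simp: gamma_t_sets_def g2)
    have "D \<notin> P"
    proof
      assume "D \<in> P"
      then obtain w where w: "w \<in> V" "D = {w, f w}" unfolding P_def by auto
      with td obtain u where "u \<in> D" "E w u" unfolding total_dominating_def by blast
      with w f[OF w(1)] irr show False by auto
    qed
    thus "D \<in> S - P" using td c unfolding S_def total_dominating_def by auto
  qed
  have "tau V E \<le> card (S - P)" unfolding tau_def
    using sub finS by (intro card_mono) auto
  also have "\<dots> = card S - card P" using PS finS by (simp add: card_Diff_subset finite_subset)
  finally have t: "tau V E \<le> card S - card P" .
  have cS: "card S = card V choose 2" unfolding S_def using fin by (simp add: n_subsets)
  have "V \<subseteq> \<Union>P" unfolding P_def by auto
  hence "card V \<le> card (\<Union>P)" using PS finS fin unfolding S_def
    by (intro card_mono) (auto intro: finite_subset)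
  also have "\<dots> \<le> sum card P" by (rule card_Union_le_sum_card)
  also have "\<dots> = sum (\<lambda>_. 2) P" using PS unfolding S_def by (intro sum.cong) auto
  finally have "card V \<le> 2 * card P" by simp
  hence ce: "\<lceil>real (card V) / 2\<rceil> \<le> int (card P)"
    by (simp add: ceiling_le_iff)
  have "card P \<le> card S" using PS finS by (simp add: card_mono)
  with t cS ce show ?thesis by linarith
qed

definition EC :: "nat \<Rightarrow> nat \<Rightarrow> bool" where
  "EC u v = (u \<in> {0,1,2,3} \<and> v \<in> {0,1,2,3} \<and> odd (u+v))"

lemma td_card: "total_dominating {0,1,2,3} EC D \<Longrightarrow> card D \<ge> 2"
proof -
  assume td: "total_dominating {0,1,2,3} EC D"
  hence "D \<subseteq> {0,1,2,3}" by (simp add: total_dominating_def)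
  hence fD: "finite D" by (rule finite_subset) simp
  show ?thesis
  proof (rule ccontr)
    assume "\<not> card D \<ge> 2"
    hence "card D = 0 \<or> card D = 1" by linarith
    then show False
    proof
      assume "card D = 0" hence "D = {}" using fD by simp
      with td show False unfolding total_dominating_def by blast
    next
      assume "card D = 1" then obtain a where "D = {a}" by (auto simp: card_Suc_eq)
      with td show False by (auto simp: total_dominating_def EC_def)
    qed
  qed
qed

lemma gsets: "{D. total_dominating {0,1,2,3} EC D \<and> card D = 2} = {{0,1},{1,2},{2,3},{0,3}}"
proof -
  have "{D. total_dominating {0,1,2,3} EC D \<and> card D = 2} =
     {D \<in> Pow {0,1,2,3}. total_dominating {0,1,2,3} EC D \<and> card D = 2}"
    by (auto simp: total_dominating_def)
  also have "\<dots> = {{0,1},{1,2},{2,3},{0,3}}"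
    apply (simp add: Pow_insert total_dominating_def EC_def insert_commute)
    apply (rule set_eqI)
    apply (simp only: mem_Collect_eq)
    apply (rule iffI)
     apply (elim conjE disjE; simp)
    apply (simp only: insert_iff empty_iff)
    apply (elim disjE; simp)
    done
  finally show ?thesis .
qed


lemma g2: "gamma_t {0,1,2,3} EC = 2"
  unfolding gamma_t_def
proof (rule Least_equality)
  show "\<exists>D. total_dominating {0, 1, 2, 3} EC D \<and> card D = 2"
    by (rule exI[of _ "{0,1}"]) (simp add: total_dominating_def EC_def)
next
  fix y assume "\<exists>D. total_dominating {0, 1, 2, 3} EC D \<and> card D = y"
  thus "2 \<le> y" using td_card by blast
qed

lemma ex_part: "\<exists>(V :: nat set) E.
            simple_graph V E \<and> no_isolated V E \<and> gamma_t V E = 2 \<and>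
            (\<forall>v\<in>V. degree V E v \<le> card V - 2) \<and>
            int (tau V E) = int (card V choose 2) - \<lceil>real (card V) / 2\<rceil>"
proof (intro exI conjI)
  show "simple_graph {0,1,2,3::nat} EC" by (auto simp: simple_graph_def EC_def)
  show "no_isolated {0,1,2,3::nat} EC"
    unfolding no_isolated_def EC_def by (auto intro: bexI[of _ 1] bexI[of _ 0])
  show "gamma_t {0,1,2,3} EC = 2" by (rule g2)
  have d: "{u \<in> {0,1,2,3::nat}. EC v u} \<subseteq> {0,1,2,3} - {v, (v + 2) mod 4}" for v
    by (auto simp: EC_def)
  show "\<forall>v\<in>{0,1,2,3::nat}. degree {0,1,2,3} EC v \<le> card {0,1,2,3::nat} - 2"
  proof
    fix v :: nat assume v: "v \<in> {0,1,2,3}"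
    have "degree {0,1,2,3} EC v \<le> card ({0,1,2,3::nat} - {v, (v + 2) mod 4})"
      unfolding degree_def by (rule card_mono[OF _ d]) simp
    also have "\<dots> = 2" using v by auto
    finally show "degree {0,1,2,3} EC v \<le> card {0,1,2,3::nat} - 2" by simp
  qed
  have "tau {0,1,2,3} EC = 4"
    unfolding tau_def gamma_t_sets_def g2 gsets by (simp add: card_insert_if doubleton_eq_iff)
  thus "int (tau {0,1,2,3} EC) = int (card {0,1,2,3::nat} choose 2) - \<lceil>real (card {0,1,2,3::nat}) / 2\<rceil>"
    by (simp add: numeral_eq_Suc)
qed

theorem proposition2p16:
  shows "(\<forall>(V :: 'a set) E.
            simple_graph V E \<and> no_isolated V E \<and> gamma_t V E = 2 \<and>
            (\<forall>v\<in>V. degree V E v \<le> card V - 2)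
            \<longrightarrow> int (tau V E) \<le> int (card V choose 2) - \<lceil>real (card V) / 2\<rceil>)
       \<and> (\<exists>(V :: nat set) E.
            simple_graph V E \<and> no_isolated V E \<and> gamma_t V E = 2 \<and>
            (\<forall>v\<in>V. degree V E v \<le> card V - 2) \<and>
            int (tau V E) = int (card V choose 2) - \<lceil>real (card V) / 2\<rceil>)"
  using upper ex_part by blast

end
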